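(* Let $L \ge N$, let $\mathbf{T} \in \mathbb{R}^{L\times N}$ have full rank $N$, and let $\gamma>0$. Define on $\mathbb{R}^N$ the norm $\|\mathbf{x}\|_{\mathbf{T}} := \|\mathbf{T}\mathbf{x}\|_2$. Then the operators $\mathbf{T}^{\dagger}S_\gamma\mathbf{T}$ and $\mathbf{I}-\mathbf{T}^{\dagger}S_\gamma\mathbf{T}$ are firmly non-expansive with respect to $\|\cdot\|_{\mathbf{T}}$, i.e., for all $\mathbf{x},\mathbf{y}\in\mathbb{R}^N$, $$\|\mathbf{T}^{\dagger}S_\gamma\mathbf{T}\mathbf{x} - \mathbf{T}^{\dagger}S_\gamma\mathbf{T}\mathbf{y}\|_{\mathbf{T}}^2 + \|(\mathbf{I}-\mathbf{T}^{\dagger}S_\gamma\mathbf{T})\mathbf{x} - (\mathbf{I}-\mathbf{T}^{\dagger}S_\gamma\mathbf{T})\mathbf{y}\|_{\mathbf{T}}^2 \le \|\mathbf{x}-\mathbf{y}\|_{\mathbf{T}}^2.$$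
   Context: $\mathbf{T}^*$ is the transpose, $\mathbf{T}^{\dagger}=(\mathbf{T}^*\mathbf{T})^{-1}\mathbf{T}^*$ the Moore–Penrose inverse, $\mathbf{I}$ the $N\times N$ identity, $\|\cdot\|_2$ the Euclidean norm on $\mathbb{R}^L$. $S_\gamma:\mathbb{R}^L\to\mathbb{R}^L$ is componentwise soft shrinkage: $[S_\gamma(\mathbf{y})]_j = y_j-\gamma$ if $y_j\ge\gamma$, $y_j+\gamma$ if $y_j\le-\gamma$, $0$ if $|y_j|<\gamma$. *)

theory Defs
  imports "HOL-Analysis.Analysis"
begin

definition soft_shrink :: "real \<Rightarrow> real ^ 'l \<Rightarrow> real ^ 'l" where
  "soft_shrink \<gamma> y = (\<chi> j. if y $ j \<ge> \<gamma> then y $ j - \<gamma>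
                        else if y $ j \<le> - \<gamma> then y $ j + \<gamma> else 0)"

text \<open>Moore--Penrose inverse of a full column rank matrix: (T^* T)^{-1} T^*.\<close>
definition mp_inverse :: "real ^ 'n ^ 'l \<Rightarrow> real ^ 'l ^ 'n" where
  "mp_inverse T = matrix_inv (transpose T ** T) ** transpose T"

definition T_norm :: "real ^ 'n ^ 'l \<Rightarrow> real ^ 'n \<Rightarrow> real" where
  "T_norm T x = norm (T *v x)"

end

theory Submission imports Defs begin

lemma ss: fixes g u v :: real assumes "g > 0"
  and "s = (\<lambda>t. if t \<ge> g then t - g else if t \<le> -g then t + g else 0)"
  shows "(s u - s v)^2 \<le> (u - v) * (s u - s v)"
proof -
  have "0 \<le> (s u - s v) * ((u-v) - (s u - s v))"
    unfolding zero_le_mult_iff using assms(1) unfolding assms(2) by auto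
  then show ?thesis by (simp add: power2_eq_square algebra_simps)
qed

lemma ss_vec: fixes g :: real and u v :: "real^'l" assumes "g > 0"
  shows "inner (soft_shrink g u - soft_shrink g v) (soft_shrink g u - soft_shrink g v)
     \<le> inner (u - v) (soft_shrink g u - soft_shrink g v)"
  unfolding inner_vec_def
proof (rule sum_mono)
  fix i
  show "(soft_shrink g u - soft_shrink g v) $ i \<bullet> (soft_shrink g u - soft_shrink g v) $ i
         \<le> (u - v) $ i \<bullet> (soft_shrink g u - soft_shrink g v) $ i"
    using ss[OF assms refl, of "u$i" "v$i"]
    by (simp add: soft_shrink_def power2_eq_square)
qed

lemma inner_mv: "inner ((A::real^'n^'m) *v x) y = inner x (transpose A *v y)"
  by (metis dot_lmul_matrix inner_commute transpose_matrix_vector)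

lemma matrix_inv_props:
  assumes "invertible (A::real^'n^'n)"
  shows "matrix_inv A ** A = mat 1" "A ** matrix_inv A = mat 1"
proof -
  have "\<exists>A'. A ** A' = mat 1 \<and> A' ** A = mat 1" using assms unfolding invertible_def by blast
  from someI_ex[OF this] show "matrix_inv A ** A = mat 1" "A ** matrix_inv A = mat 1"
    unfolding matrix_inv_def by auto
qed

theorem proposition2p3:
  fixes T :: "real ^ 'n ^ 'l" and \<gamma> :: real and x y :: "real ^ 'n"
  assumes "CARD('n) \<le> CARD('l)"
    and "rank T = CARD('n)"
    and "\<gamma> > 0"
  shows "let P = (\<lambda>z. mp_inverse T *v soft_shrink \<gamma> (T *v z));
             Q = (\<lambda>z. z - P z)
         in (T_norm T (P x - P y))\<^sup>2 + (T_norm T (Q x - Q y))\<^sup>2 \<le> (T_norm T (x - y))\<^sup>2"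
proof -
  define G where "G = transpose T ** T"
  have injT: "inj ((*v) T)" using assms(2) full_rank_injective by blast
  have Gsym: "transpose G = G" unfolding G_def by (simp add: matrix_transpose_mul)
  have Gv: "inner v (G *v w) = inner (T *v v) (T *v w)" for v w
    unfolding G_def by (simp add: inner_mv matrix_vector_mul_assoc[symmetric])
  have "inj ((*v) G)"
  proof (rule injI)
    fix v w assume "G *v v = G *v w"
    then have "G *v (v - w) = 0" by (simp add: matrix_vector_mult_diff_distrib)
    then have "inner (T *v (v - w)) (T *v (v - w)) = 0" using Gv[of "v-w" "v-w"] by simp
    then have "T *v (v - w) = 0" by simp
    then have "T *v v = T *v w" by (simp add: matrix_vector_mult_diff_distrib)
    then show "v = w" using injT by (simp add: inj_eq)
  qed
  then have "invertible G" using matrix_left_invertible_injective invertible_left_inverse by blast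
  define Gi where "Gi = matrix_inv G"
  have GiG: "Gi ** G = mat 1" and GGi: "G ** Gi = mat 1" using matrix_inv_props[OF \<open>invertible G\<close>] Gi_def by auto
  have M: "mp_inverse T *v b = Gi *v (transpose T *v b)" for b
    unfolding mp_inverse_def Gi_def G_def by (simp add: matrix_vector_mul_assoc[symmetric])
  define PP where "PP = (\<lambda>b. T *v (Gi *v (transpose T *v b)))"
  have Pi_sq: "inner (PP b) (PP c) = inner (PP b) c" for b c
  proof -
    have "inner (PP b) (PP c) = inner (Gi *v (transpose T *v b)) (G *v (Gi *v (transpose T *v c)))"
      unfolding PP_def Gv ..
    also have "G *v (Gi *v (transpose T *v c)) = transpose T *v c"
      by (simp add: matrix_vector_mul_assoc GGi)
    also have "inner (Gi *v (transpose T *v b)) (transpose T *v c) = inner (PP b) c"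
      unfolding PP_def inner_mv by simp
    finally show ?thesis .
  qed
  have Pi_a: "inner (T *v d) (PP b) = inner (T *v d) b" for d b
  proof -
    have "inner (T *v d) (PP b) = inner (PP b) (T *v d)" by (simp add: inner_commute)
    also have "\<dots> = inner (Gi *v (transpose T *v b)) (G *v d)" unfolding PP_def Gv ..
    also have "\<dots> = inner (transpose T *v b) (transpose Gi *v (G *v d))" by (simp add: inner_mv)
    also have "transpose Gi *v (G *v d) = d"
    proof -
      have "transpose Gi ** G = mat 1" using GGi Gsym
        by (metis matrix_transpose_mul transpose_mat)
      then show ?thesis by (simp add: matrix_vector_mul_assoc)
    qed
    also have "inner (transpose T *v b) d = inner (T *v d) b"
      by (metis inner_mv inner_commute)
    finally show ?thesis .
  qed
  define a where "a = T *v x - T *v y"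
  define b where "b = soft_shrink \<gamma> (T *v x) - soft_shrink \<gamma> (T *v y)"
  have ad: "a = T *v (x - y)" unfolding a_def by (simp add: matrix_vector_mult_diff_distrib)
  have bb: "inner b b \<le> inner a b" unfolding a_def b_def by (rule ss_vec[OF assms(3)])
  have "inner (PP b) (PP b) \<le> norm (PP b) * norm b"
    using Pi_sq[of b b] Cauchy_Schwarz_ineq2[of "PP b" b] by simp
  then have "norm (PP b) ^ 2 \<le> norm (PP b) * norm b" by (simp add: power2_norm_eq_inner)
  then have "norm (PP b) \<le> norm b"
    by (metis mult_le_cancel_left_pos norm_ge_zero power2_eq_square order_less_le mult_zero_left norm_zero)
  then have n1: "inner (PP b) (PP b) \<le> inner b b"
    by (metis power2_norm_eq_inner power_mono norm_ge_zero)
  have n2: "inner a (PP b) = inner a b" unfolding ad by (rule Pi_a)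
  have TP: "T *v (mp_inverse T *v soft_shrink \<gamma> (T *v x) - mp_inverse T *v soft_shrink \<gamma> (T *v y)) = PP b"
    unfolding M PP_def b_def by (simp add: matrix_vector_mult_diff_distrib)
  have TQ: "T *v ((x - mp_inverse T *v soft_shrink \<gamma> (T *v x)) - (y - mp_inverse T *v soft_shrink \<gamma> (T *v y))) = a - PP b"
    using TP unfolding a_def by (simp add: matrix_vector_mult_diff_distrib algebra_simps)
  have "inner (PP b) (PP b) + inner (a - PP b) (a - PP b) \<le> inner a a"
    using n1 n2 bb by (simp add: inner_diff_left inner_diff_right inner_commute)
  then show ?thesis
    unfolding Let_def T_norm_def TP TQ ad[symmetric] by (simp add: power2_norm_eq_inner)
qed
end
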